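(* Let $p$ be a prime, $V$ a finite-dimensional $\mathbb{F}_p$-vector space, $K \subseteq \mathcal{A}(V)$ a symplectic subspace, and $\beta: V \times V \to K^*$ a bilinear map with $\omega_K(v,w) = \beta(v,w)-\beta(w,v)$ for all $v,w\in V$. Then any two irreducible complex representations of $H = H(V,K,\beta)$ with the same nontrivial central character (i.e. on which the central subgroup $K^* = \{(0,t)\}$ acts by the same nontrivial character) are isomorphic.
   Context: For an $\mathbb{F}_p$-vector space $V$, $\mathcal{A}(V)$ is the space of alternating bilinear forms $V\times V \to \mathbb{F}_p$. A subspace $K\subseteq\mathcal{A}(V)$ is symplectic if every nonzero element of $K$ is non-degenerate. $\omega_K: V \times V \to K^*$ is defined by $\omega_K(v,w)(k) = k(v,w)$ for $k\in K$. The group $H(V,K,\beta)$ has underlying set $V \times K^*$ with multiplication $(v,t)(v',t') = (v+v', t+t'+\beta(v,v'))$ (a generalized Heisenberg group when $K$ is symplectic). *)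

theory Defs
  imports "HOL-Analysis.Analysis" "HOL-Algebra.Group"
begin

text \<open>The base field is an abstract field type 'f of prime cardinality p (i.e. F_p).
  V is the type 'v with a scalar multiplication sc making it an 'f-vector space.\<close>

definition fin_dim_vs :: "('f::field \<Rightarrow> 'v::ab_group_add \<Rightarrow> 'v) \<Rightarrow> bool" where
  "fin_dim_vs sc \<longleftrightarrow> Vector_Spaces.vector_space sc \<and>
     (\<exists>B. finite B \<and> module.span sc B = UNIV)"

definition bilinear_form :: "('f::field \<Rightarrow> 'v::ab_group_add \<Rightarrow> 'v) \<Rightarrow> ('v \<Rightarrow> 'v \<Rightarrow> 'f) \<Rightarrow> bool" where
  "bilinear_form sc b \<longleftrightarrow>
     (\<forall>x y z. b (x + y) z = b x z + b y z) \<and>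
     (\<forall>x y z. b x (y + z) = b x y + b x z) \<and>
     (\<forall>a x y. b (sc a x) y = a * b x y) \<and>
     (\<forall>a x y. b x (sc a y) = a * b x y)"

definition alt_forms :: "('f::field \<Rightarrow> 'v::ab_group_add \<Rightarrow> 'v) \<Rightarrow> ('v \<Rightarrow> 'v \<Rightarrow> 'f) set" where
  "alt_forms sc = {b. bilinear_form sc b \<and> (\<forall>v. b v v = 0)}"

definition forms_subspace :: "('v \<Rightarrow> 'v \<Rightarrow> 'f::field) set \<Rightarrow> bool" where
  "forms_subspace K \<longleftrightarrow> (\<lambda>v w. 0) \<in> K \<and>
     (\<forall>k\<in>K. \<forall>k'\<in>K. (\<lambda>v w. k v w + k' v w) \<in> K) \<and>
     (\<forall>a. \<forall>k\<in>K. (\<lambda>v w. a * k v w) \<in> K)"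

definition nondegenerate :: "('v::zero \<Rightarrow> 'v \<Rightarrow> 'f::zero) \<Rightarrow> bool" where
  "nondegenerate k \<longleftrightarrow> (\<forall>v. (\<forall>w. k v w = 0) \<longrightarrow> v = 0)"

definition symplectic :: "('v::zero \<Rightarrow> 'v \<Rightarrow> 'f::zero) set \<Rightarrow> bool" where
  "symplectic K \<longleftrightarrow> (\<forall>k\<in>K. k \<noteq> (\<lambda>v w. 0) \<longrightarrow> nondegenerate k)"

text \<open>K^*: linear functionals on K, represented extensionally (value 0 outside K).\<close>
definition Kdual :: "('v \<Rightarrow> 'v \<Rightarrow> 'f::field) set \<Rightarrow> (('v \<Rightarrow> 'v \<Rightarrow> 'f) \<Rightarrow> 'f) set" where
  "Kdual K = {t. (\<forall>k\<in>K. \<forall>k'\<in>K. t (\<lambda>v w. k v w + k' v w) = t k + t k') \<and>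
                 (\<forall>a. \<forall>k\<in>K. t (\<lambda>v w. a * k v w) = a * t k) \<and>
                 (\<forall>k. k \<notin> K \<longrightarrow> t k = 0)}"

definition omegaK :: "('v \<Rightarrow> 'v \<Rightarrow> 'f::zero) set \<Rightarrow> 'v \<Rightarrow> 'v \<Rightarrow> (('v \<Rightarrow> 'v \<Rightarrow> 'f) \<Rightarrow> 'f)" where
  "omegaK K v w = (\<lambda>k. if k \<in> K then k v w else 0)"

definition bilinear_to_dual ::
  "('f::field \<Rightarrow> 'v::ab_group_add \<Rightarrow> 'v) \<Rightarrow> ('v \<Rightarrow> 'v \<Rightarrow> 'f) set \<Rightarrow>
   ('v \<Rightarrow> 'v \<Rightarrow> (('v \<Rightarrow> 'v \<Rightarrow> 'f) \<Rightarrow> 'f)) \<Rightarrow> bool" where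
  "bilinear_to_dual sc K \<beta> \<longleftrightarrow>
     (\<forall>v w. \<beta> v w \<in> Kdual K) \<and>
     (\<forall>x y z. \<beta> (x + y) z = (\<lambda>k. \<beta> x z k + \<beta> y z k)) \<and>
     (\<forall>x y z. \<beta> x (y + z) = (\<lambda>k. \<beta> x y k + \<beta> x z k)) \<and>
     (\<forall>a x y. \<beta> (sc a x) y = (\<lambda>k. a * \<beta> x y k)) \<and>
     (\<forall>a x y. \<beta> x (sc a y) = (\<lambda>k. a * \<beta> x y k))"

definition heis ::
  "('v \<Rightarrow> 'v \<Rightarrow> 'f::field) set \<Rightarrow> ('v::ab_group_add \<Rightarrow> 'v \<Rightarrow> (('v \<Rightarrow> 'v \<Rightarrow> 'f) \<Rightarrow> 'f))
   \<Rightarrow> ('v \<times> (('v \<Rightarrow> 'v \<Rightarrow> 'f) \<Rightarrow> 'f)) monoid" where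
  "heis K \<beta> = \<lparr>carrier = UNIV \<times> Kdual K,
     mult = (\<lambda>(v, t) (v', t'). (v + v', \<lambda>k. t k + t' k + \<beta> v v' k)),
     one = (0, \<lambda>k. 0)\<rparr>"

definition representation :: "('g, 'b) monoid_scheme \<Rightarrow> ('g \<Rightarrow> complex^'n^'n) \<Rightarrow> bool" where
  "representation G \<rho> \<longleftrightarrow>
     (\<forall>g\<in>carrier G. invertible (\<rho> g)) \<and>
     (\<forall>g\<in>carrier G. \<forall>h\<in>carrier G. \<rho> (g \<otimes>\<^bsub>G\<^esub> h) = \<rho> g ** \<rho> h)"

text \<open>Irreducible: no complex-linear invariant subspaces other than 0 and the whole space
  (the representation space complex^'n is nonzero since types are nonempty).\<close>
definition irreducible_rep :: "('g, 'b) monoid_scheme \<Rightarrow> ('g \<Rightarrow> complex^'n^'n) \<Rightarrow> bool" where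
  "irreducible_rep G \<rho> \<longleftrightarrow> representation G \<rho> \<and>
     (\<forall>U. vec.subspace U \<and> (\<forall>g\<in>carrier G. \<forall>x\<in>U. \<rho> g *v x \<in> U)
          \<longrightarrow> U = {0} \<or> U = UNIV)"

definition isomorphic_reps ::
  "('g, 'b) monoid_scheme \<Rightarrow> ('g \<Rightarrow> complex^'n^'n) \<Rightarrow> ('g \<Rightarrow> complex^'m^'m) \<Rightarrow> bool" where
  "isomorphic_reps G \<rho> \<sigma> \<longleftrightarrow>
     (\<exists>(P::complex^'n^'m) (Q::complex^'m^'n). P ** Q = mat 1 \<and> Q ** P = mat 1 \<and>
        (\<forall>g\<in>carrier G. P ** \<rho> g = \<sigma> g ** P))"

definition dual_character ::
  "('v \<Rightarrow> 'v \<Rightarrow> 'f::field) set \<Rightarrow> ((('v \<Rightarrow> 'v \<Rightarrow> 'f) \<Rightarrow> 'f) \<Rightarrow> complex) \<Rightarrow> bool" where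
  "dual_character K \<xi> \<longleftrightarrow>
     (\<forall>t\<in>Kdual K. \<xi> t \<noteq> 0) \<and>
     (\<forall>t\<in>Kdual K. \<forall>s\<in>Kdual K. \<xi> (\<lambda>k. t k + s k) = \<xi> t * \<xi> s)"

definition nontrivial_dual_character ::
  "('v \<Rightarrow> 'v \<Rightarrow> 'f::field) set \<Rightarrow> ((('v \<Rightarrow> 'v \<Rightarrow> 'f) \<Rightarrow> 'f) \<Rightarrow> complex) \<Rightarrow> bool" where
  "nontrivial_dual_character K \<xi> \<longleftrightarrow> dual_character K \<xi> \<and> (\<exists>t\<in>Kdual K. \<xi> t \<noteq> 1)"

definition has_central_character ::
  "('v::zero \<Rightarrow> 'v \<Rightarrow> 'f::field) set \<Rightarrow> ('v \<times> (('v \<Rightarrow> 'v \<Rightarrow> 'f) \<Rightarrow> 'f) \<Rightarrow> complex^'n^'n)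
   \<Rightarrow> ((('v \<Rightarrow> 'v \<Rightarrow> 'f) \<Rightarrow> 'f) \<Rightarrow> complex) \<Rightarrow> bool" where
  "has_central_character K \<rho> \<xi> \<longleftrightarrow> (\<forall>t\<in>Kdual K. \<rho> (0, t) = mat (\<xi> t))"

end

theory Submission
  imports Defs "HOL-Library.Function_Algebras"
begin

lemma finite_UNIV_fun:
  assumes "finite (UNIV::'a set)" "finite (UNIV::'b set)"
  shows "finite (UNIV::('a \<Rightarrow> 'b) set)"
proof -
  have "(UNIV::('a \<Rightarrow> 'b) set) = {f. \<forall>x. (x \<in> UNIV \<longrightarrow> f x \<in> UNIV) \<and> (x \<notin> UNIV \<longrightarrow> f x = undefined)}"
    by auto
  then show ?thesis using finite_set_of_finite_funs[OF assms] by simp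
qed

definition lin_dual :: "('f::field \<Rightarrow> 'a::ab_group_add \<Rightarrow> 'a) \<Rightarrow> 'a set \<Rightarrow> ('a \<Rightarrow> 'f) set" where
  "lin_dual scl U = {f. (\<forall>x\<in>U. \<forall>y\<in>U. f (x+y) = f x + f y) \<and> (\<forall>a. \<forall>x\<in>U. f (scl a x) = a * f x)
       \<and> (\<forall>x. x \<notin> U \<longrightarrow> f x = 0)}"

lemma finite_lin_dual:
  assumes "finite U" "finite (UNIV::'f set)"
  shows "finite (lin_dual (scl::'f::field \<Rightarrow> 'a::ab_group_add \<Rightarrow> 'a) U)"
proof (rule finite_subset[OF _ finite_set_of_finite_funs[OF assms, of 0]])
  show "lin_dual scl U \<subseteq> {f. \<forall>x. (x \<in> U \<longrightarrow> f x \<in> UNIV) \<and> (x \<notin> U \<longrightarrow> f x = 0)}"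
    by (auto simp: lin_dual_def)
qed

lemma card_lin_dual_le:
  fixes scl :: "'f::field \<Rightarrow> 'a::ab_group_add \<Rightarrow> 'a"
  assumes vs: "vector_space scl" and finF: "finite (UNIV::'f set)"
    and U: "module.subspace scl U" and finU: "finite U"
  shows "card (lin_dual scl U) \<le> card U"
proof -
  interpret vector_space scl by (rule vs)
  obtain B where B: "B \<subseteq> U" "independent B" "U \<subseteq> span B" by (meson basis_exists)
  have finB: "finite B" using B(1) finU finite_subset by blast
  have spanB: "span B = U" using B U span_subspace by blast
  let ?P = "PiE B (\<lambda>_. UNIV::'f set)"
  have "card (lin_dual scl U) \<le> card ?P"
  proof (rule card_inj_on_le)
    show "finite ?P" using finB finF by (intro finite_PiE) auto
    show "(\<lambda>f. restrict f B) ` lin_dual scl U \<subseteq> ?P" by auto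
    show "inj_on (\<lambda>f. restrict f B) (lin_dual scl U)"
    proof (rule inj_onI)
      fix f g assume f: "f \<in> lin_dual scl U" and g: "g \<in> lin_dual scl U"
        and eq: "restrict f B = restrict g B"
      have fB: "\<And>b. b \<in> B \<Longrightarrow> f b = g b" using eq by (metis restrict_apply')
      have z: "0 \<in> U" using U by (rule subspace_0)
      have fa: "\<forall>x\<in>U. \<forall>y\<in>U. f (x+y) = f x + f y" using f by (simp add: lin_dual_def)
      have ga: "\<forall>x\<in>U. \<forall>y\<in>U. g (x+y) = g x + g y" using g by (simp add: lin_dual_def)
      have f0: "f 0 = 0" using fa[rule_format, OF z z] by (simp only: add_0_left add_cancel_right_right)
      have g0: "g 0 = 0" using ga[rule_format, OF z z] by (simp only: add_0_left add_cancel_right_right)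
      have sub: "subspace {x. x \<in> U \<and> f x = g x}"
        unfolding subspace_def using f g U f0 g0
        by (simp add: lin_dual_def subspace_add subspace_scale subspace_0)
      show "f = g"
      proof
        fix x
        show "f x = g x"
        proof (cases "x \<in> U")
          case True
          then have "x \<in> span B" using spanB by simp
          then have "x \<in> {x. x \<in> U \<and> f x = g x}"
            by (rule span_induct) (use sub fB B(1) in auto)
          then show ?thesis by simp
        next
          case False then show ?thesis using f g by (simp add: lin_dual_def)
        qed
      qed
    qed
  qed
  also have "card ?P \<le> card U"
  proof (rule card_inj_on_le)
    show "finite U" by (rule finU)
    show "(\<lambda>c. \<Sum>b\<in>B. scl (c b) b) ` ?P \<subseteq> U"
      using B(1) U by (auto intro!: subspace_sum subspace_scale)
    show "inj_on (\<lambda>c. \<Sum>b\<in>B. scl (c b) b) ?P"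
    proof (rule inj_onI)
      fix c d assume c: "c \<in> ?P" and d: "d \<in> ?P"
        and eq: "(\<Sum>b\<in>B. scl (c b) b) = (\<Sum>b\<in>B. scl (d b) b)"
      have h1: "(\<Sum>b\<in>B. scl (c b - d b) b) = 0"
        using eq by (simp add: scale_left_diff_distrib sum_subtractf)
      have h2: "\<forall>S\<subseteq>B. finite S \<longrightarrow> (\<forall>u. (\<Sum>v\<in>S. scl (u v) v) = 0 \<longrightarrow> (\<forall>v\<in>S. u v = 0))"
        using B(2) by (simp only: independent_explicit_finite_subsets)
      have "\<forall>b\<in>B. c b - d b = 0"
        using h2[rule_format, OF subset_refl finB, of "\<lambda>b. c b - d b"] h1 by simp
      then show "c = d" using c d by (metis PiE_ext eq_iff_diff_eq_0)
    qed
  qed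
  finally show ?thesis .
qed

definition fsc :: "'f::field \<Rightarrow> ('a \<Rightarrow> 'f) \<Rightarrow> ('a \<Rightarrow> 'f)" where
  "fsc a f = (\<lambda>x. a * f x)"

definition fsc2 :: "'f::field \<Rightarrow> ('a \<Rightarrow> 'b \<Rightarrow> 'f) \<Rightarrow> ('a \<Rightarrow> 'b \<Rightarrow> 'f)" where
  "fsc2 a f = (\<lambda>x y. a * f x y)"

lemma vs_fsc: "vector_space (fsc :: 'f::field \<Rightarrow> ('a \<Rightarrow> 'f) \<Rightarrow> ('a \<Rightarrow> 'f))"
  by unfold_locales (simp_all add: fsc_def fun_eq_iff distrib_left distrib_right)

lemma vs_fsc2: "vector_space (fsc2 :: 'f::field \<Rightarrow> ('a \<Rightarrow> 'b \<Rightarrow> 'f) \<Rightarrow> ('a \<Rightarrow> 'b \<Rightarrow> 'f))"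
  by unfold_locales (simp_all add: fsc2_def fun_eq_iff distrib_left distrib_right)

lemma plus2_eq: "k + k' = (\<lambda>v w. k v w + k' v w)"
  by (simp add: fun_eq_iff)

lemma zero2_eq: "0 = (\<lambda>v w. 0)"
  by (simp add: fun_eq_iff)

lemma Kdual_eq: "Kdual K = lin_dual fsc2 K"
  unfolding Kdual_def lin_dual_def fsc2_def by (simp only: plus2_eq)

lemma forms_subspace_sub:
  assumes "forms_subspace K"
  shows "module.subspace fsc2 K"
proof -
  interpret vector_space fsc2 by (rule vs_fsc2)
  show ?thesis
    using assms unfolding subspace_def forms_subspace_def fsc2_def
    by (simp only: plus2_eq zero2_eq) blast
qed

lemma duality:
  fixes K :: "('v::ab_group_add \<Rightarrow> 'v \<Rightarrow> 'f::field) set"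
  assumes finF: "finite (UNIV::'f set)" and finV: "finite (UNIV::'v set)"
    and Kalt: "K \<subseteq> alt_forms sc" and Ksub: "forms_subspace K" and symp: "symplectic K"
    and v0: "v0 \<noteq> 0"
  shows "Kdual K \<subseteq> range (omegaK K v0)"
proof -
  have kadd: "k v0 (w + w') = k v0 w + k v0 w'" if "k \<in> K" for k w w'
    using Kalt that by (auto simp: alt_forms_def bilinear_form_def)
  have ksc: "k v0 (sc a w) = a * k v0 w" if "k \<in> K" for k a w
    using Kalt that by (auto simp: alt_forms_def bilinear_form_def)
  have k0: "k v0 0 = 0" if "k \<in> K" for k
    using kadd[OF that, of 0 0] by (simp only: add_0_left add_cancel_right_right)
  have finK: "finite K"
    using finite_subset[OF subset_UNIV finite_UNIV_fun[OF finV finite_UNIV_fun[OF finV finF]]] .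
  have KS: "module.subspace fsc2 K" by (rule forms_subspace_sub[OF Ksub])
  have finKd: "finite (Kdual K)" unfolding Kdual_eq using finite_lin_dual[OF finK finF] .
  define W where "W = range (omegaK K v0)"
  have WK: "W \<subseteq> Kdual K"
  proof
    fix z assume "z \<in> W"
    then obtain w where z: "z = omegaK K v0 w" by (auto simp: W_def)
    have c1: "(\<lambda>v w. k v w + k' v w) \<in> K" if "k \<in> K" "k' \<in> K" for k k'
      using Ksub that by (simp add: forms_subspace_def)
    have c2: "(\<lambda>v w. a * k v w) \<in> K" if "k \<in> K" for a k
      using Ksub that by (simp add: forms_subspace_def)
    show "z \<in> Kdual K" unfolding z Kdual_def omegaK_def using c1 c2 by auto
  qed
  have finW: "finite W" using finite_subset[OF WK finKd] .
  have W0: "0 \<in> W"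
  proof -
    have "0 = omegaK K v0 0" using k0 by (auto simp: omegaK_def fun_eq_iff)
    then show ?thesis unfolding W_def by (metis rangeI)
  qed
  have Wadd: "x + y \<in> W" if xyW: "x \<in> W" "y \<in> W" for x y
  proof -
    obtain w w' where "x = omegaK K v0 w" "y = omegaK K v0 w'" using xyW unfolding W_def by blast
    moreover have "omegaK K v0 w + omegaK K v0 w' = omegaK K v0 (w + w')"
      using kadd by (auto simp: omegaK_def fun_eq_iff)
    ultimately show ?thesis unfolding W_def by (metis rangeI)
  qed
  have Wsc: "fsc a x \<in> W" if xW: "x \<in> W" for a x
  proof -
    obtain w where "x = omegaK K v0 w" using xW unfolding W_def by blast
    moreover have "fsc a (omegaK K v0 w) = omegaK K v0 (sc a w)"
      using ksc by (auto simp: omegaK_def fun_eq_iff fsc_def)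
    ultimately show ?thesis unfolding W_def by (metis rangeI)
  qed
  have WS: "module.subspace fsc W"
  proof -
    interpret vector_space "fsc :: 'f \<Rightarrow> (('v \<Rightarrow> 'v \<Rightarrow> 'f) \<Rightarrow> 'f) \<Rightarrow> _" by (rule vs_fsc)
    show ?thesis unfolding subspace_def using W0 Wadd Wsc by blast
  qed
  define ev where "ev k = (\<lambda>z. if z \<in> W then z k else (0::'f))" for k
  have "card K \<le> card (lin_dual fsc W)"
  proof (rule card_inj_on_le)
    show "finite (lin_dual fsc W)" by (rule finite_lin_dual[OF finW finF])
    show "ev ` K \<subseteq> lin_dual fsc W"
      unfolding lin_dual_def ev_def fsc_def
      using Wadd Wsc[unfolded fsc_def]
      by auto
    show "inj_on ev K"
    proof (rule inj_onI)
      fix k k' assume k: "k \<in> K" and k': "k' \<in> K" and eq: "ev k = ev k'"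
      have "k v0 w = k' v0 w" for w
      proof -
        have "omegaK K v0 w \<in> W" by (simp add: W_def)
        then have "ev k (omegaK K v0 w) = omegaK K v0 w k" "ev k' (omegaK K v0 w) = omegaK K v0 w k'"
          by (auto simp: ev_def)
        then show ?thesis using eq k k' by (simp add: omegaK_def)
      qed
      define d where "d = (\<lambda>v w. k v w + (-1) * k' v w)"
      have Ksc: "\<forall>a. \<forall>k\<in>K. (\<lambda>v w. a * k v w) \<in> K" and Kad: "\<forall>k\<in>K. \<forall>k'\<in>K. (\<lambda>v w. k v w + k' v w) \<in> K"
        using Ksub by (simp_all add: forms_subspace_def)
      have "d \<in> K" using Kad[rule_format, OF k Ksc[rule_format, OF k', of "-1"]] by (simp add: d_def)
      have dz: "\<forall>w. d v0 w = 0" using \<open>\<And>w. k v0 w = k' v0 w\<close> by (simp add: d_def)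
      have "d = (\<lambda>v w. 0)"
      proof (rule ccontr)
        assume "d \<noteq> (\<lambda>v w. 0)"
        then have "nondegenerate d" using symp \<open>d \<in> K\<close> by (simp add: symplectic_def)
        then show False using dz v0 by (simp add: nondegenerate_def)
      qed
      then show "k = k'" by (auto simp: d_def fun_eq_iff dest!: fun_cong)
    qed
  qed
  also have "\<dots> \<le> card W"
    by (rule card_lin_dual_le[OF vs_fsc finF WS finW])
  finally have c1: "card K \<le> card W" .
  have c2: "card W \<le> card (Kdual K)" by (rule card_mono[OF finKd WK])
  have "card (Kdual K) \<le> card K"
    unfolding Kdual_eq by (rule card_lin_dual_le[OF vs_fsc2 finF KS finK])
  then have "card W = card (Kdual K)"
    using c1 c2 by linarith
  then show ?thesis using card_subset_eq[OF finKd WK] W_def by simp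
qed

lemma heis_carrier: "carrier (heis K \<beta>) = UNIV \<times> Kdual K"
  by (simp add: heis_def)
lemma heis_mult: "(v, t) \<otimes>\<^bsub>heis K \<beta>\<^esub> (v', t') = (v + v', \<lambda>k. t k + t' k + \<beta> v v' k)"
  by (simp add: heis_def)
lemma heis_one: "\<one>\<^bsub>heis K \<beta>\<^esub> = (0, \<lambda>k. 0)"
  by (simp add: heis_def)

lemma Kdual_zero: "(\<lambda>k. 0) \<in> Kdual K"
  by (simp add: Kdual_def)
lemma Kdual_add: "t \<in> Kdual K \<Longrightarrow> s \<in> Kdual K \<Longrightarrow> (\<lambda>k. t k + s k) \<in> Kdual K"
  by (simp add: Kdual_def algebra_simps)
lemma Kdual_neg: "t \<in> Kdual K \<Longrightarrow> (\<lambda>k. - t k) \<in> Kdual K"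
  by (simp add: Kdual_def algebra_simps)
lemma Kdual_diff: "t \<in> Kdual K \<Longrightarrow> s \<in> Kdual K \<Longrightarrow> (\<lambda>k. t k - s k) \<in> Kdual K"
  by (simp add: Kdual_def algebra_simps)

lemma mat_mul_sum_left: "(A::complex^'n^'m) ** sum f S = (\<Sum>x\<in>S. A ** f x)"
  by (simp add: vec_eq_iff matrix_matrix_mult_def sum_component sum_distrib_left sum.swap[of _ S])
lemma mat_mul_sum_right: "sum f S ** (A::complex^'n^'m) = (\<Sum>x\<in>S. f x ** A)"
  by (simp add: vec_eq_iff matrix_matrix_mult_def sum_component sum_distrib_right sum.swap[of _ S])
lemma trace_mul_mat: "trace ((M::complex^'n^'n) ** mat c) = c * trace M"
  by (simp add: trace_def matrix_matrix_mult_def mat_def sum_distrib_left mult.commute if_distrib cong: if_cong)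
lemma trace_mat: "trace (mat c :: complex^'n^'n) = of_nat CARD('n) * c"
  by (simp add: trace_def mat_def)
lemma entry_lemma:
  fixes S :: "complex^'m^'m" and R :: "complex^'n^'n" and a :: 'm and b :: 'n
  shows "(S ** (\<chi> i j. if i = a \<and> j = b then 1 else 0) ** R) $ a $ b = S $ a $ a * R $ b $ b"
proof -
  let ?E = "(\<chi> i j. if i = a \<and> j = b then 1 else 0) :: complex^'n^'m"
  have 1: "(S ** ?E) $ a $ k = (if k = b then S $ a $ a else 0)" for k
  proof -
    have "(S ** ?E) $ a $ k = (\<Sum>j\<in>UNIV. S $ a $ j * (if j = a \<and> k = b then 1 else 0))"
      by (simp add: matrix_matrix_mult_def)
    also have "\<dots> = (\<Sum>j\<in>UNIV. if j = a then (if k = b then S $ a $ a else 0) else 0)"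
      by (rule sum.cong) auto
    also have "\<dots> = (if k = b then S $ a $ a else 0)" by simp
    finally show ?thesis .
  qed
  have "(S ** ?E ** R) $ a $ b = (\<Sum>k\<in>UNIV. (S ** ?E) $ a $ k * R $ k $ b)"
    by (simp add: matrix_matrix_mult_def)
  also have "\<dots> = (\<Sum>k\<in>UNIV. if k = b then S $ a $ a * R $ b $ b else 0)"
    by (rule sum.cong) (auto simp: 1)
  also have "\<dots> = S $ a $ a * R $ b $ b" by simp
  finally show ?thesis .
qed

locale hsetting =
  fixes sc :: "'f::field \<Rightarrow> 'v::ab_group_add \<Rightarrow> 'v"
    and K :: "('v \<Rightarrow> 'v \<Rightarrow> 'f) set"
    and \<beta> :: "'v \<Rightarrow> 'v \<Rightarrow> (('v \<Rightarrow> 'v \<Rightarrow> 'f) \<Rightarrow> 'f)"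
    and \<xi> :: "(('v \<Rightarrow> 'v \<Rightarrow> 'f) \<Rightarrow> 'f) \<Rightarrow> complex"
  assumes finF: "finite (UNIV::'f set)" and finV: "finite (UNIV::'v set)"
    and Kalt: "K \<subseteq> alt_forms sc" and Ksub: "forms_subspace K" and symp: "symplectic K"
    and bil: "bilinear_to_dual sc K \<beta>"
    and om: "\<forall>v w. omegaK K v w = (\<lambda>k. \<beta> v w k - \<beta> w v k)"
    and xi: "nontrivial_dual_character K \<xi>"
begin

abbreviation "G \<equiv> heis K \<beta>"

lemma bKd: "\<beta> v w \<in> Kdual K" using bil by (simp add: bilinear_to_dual_def)
lemma bl: "\<beta> (x + y) z k = \<beta> x z k + \<beta> y z k"
  using bil by (simp add: bilinear_to_dual_def)
lemma br: "\<beta> x (y + z) k = \<beta> x y k + \<beta> x z k"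
  using bil by (simp add: bilinear_to_dual_def)
lemma b0l: "\<beta> 0 z k = 0"
  using bl[of 0 0 z k] by (simp only: add_0_left add_cancel_right_right)
lemma b0r: "\<beta> z 0 k = 0"
  using br[of z 0 0 k] by (simp only: add_0_left add_cancel_right_right)
lemma bneg: "\<beta> (- x) y k = - \<beta> x y k"
  using bl[of "-x" x y k] b0l[of y k] by (simp add: eq_neg_iff_add_eq_0)

lemma grp: "group G"
proof (rule groupI)
  fix x y assume "x \<in> carrier G" "y \<in> carrier G"
  then show "x \<otimes>\<^bsub>G\<^esub> y \<in> carrier G"
    by (cases x, cases y) (auto simp: heis_carrier heis_mult intro!: Kdual_add bKd)
next
  show "\<one>\<^bsub>G\<^esub> \<in> carrier G" by (simp add: heis_carrier heis_one Kdual_zero)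
next
  fix x y z assume "x \<in> carrier G" "y \<in> carrier G" "z \<in> carrier G"
  then show "x \<otimes>\<^bsub>G\<^esub> y \<otimes>\<^bsub>G\<^esub> z = x \<otimes>\<^bsub>G\<^esub> (y \<otimes>\<^bsub>G\<^esub> z)"
    by (cases x, cases y, cases z) (simp add: heis_mult bl br fun_eq_iff add_ac)
next
  fix x assume "x \<in> carrier G"
  then show "\<one>\<^bsub>G\<^esub> \<otimes>\<^bsub>G\<^esub> x = x"
    by (cases x) (simp add: heis_mult heis_one b0l)
next
  fix x assume x: "x \<in> carrier G"
  obtain v t where xv: "x = (v, t)" by (cases x)
  with x have t: "t \<in> Kdual K" by (simp add: heis_carrier)
  let ?y = "(- v, \<lambda>k. \<beta> v v k - t k)"
  have "?y \<in> carrier G" using t by (simp add: heis_carrier Kdual_diff bKd)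
  moreover have "?y \<otimes>\<^bsub>G\<^esub> x = \<one>\<^bsub>G\<^esub>"
    by (simp add: xv heis_mult heis_one bneg)
  ultimately show "\<exists>y\<in>carrier G. y \<otimes>\<^bsub>G\<^esub> x = \<one>\<^bsub>G\<^esub>" by blast
qed

lemma xi0: "\<xi> (\<lambda>k. 0) = 1"
proof -
  have d: "dual_character K \<xi>" using xi by (simp add: nontrivial_dual_character_def)
  have m: "\<forall>t\<in>Kdual K. \<forall>s\<in>Kdual K. \<xi> (\<lambda>k. t k + s k) = \<xi> t * \<xi> s"
    using d unfolding dual_character_def by blast
  have "\<xi> (\<lambda>k. 0) = \<xi> (\<lambda>k. 0) * \<xi> (\<lambda>k. 0)"
    using m[rule_format, OF Kdual_zero Kdual_zero] by simp
  moreover have "\<xi> (\<lambda>k. 0) \<noteq> 0" using d Kdual_zero unfolding dual_character_def by blast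
  ultimately show ?thesis by simp
qed

lemma xineg: "t \<in> Kdual K \<Longrightarrow> \<xi> (\<lambda>k. - t k) * \<xi> t = 1"
proof -
  assume t: "t \<in> Kdual K"
  have d: "dual_character K \<xi>" using xi by (simp add: nontrivial_dual_character_def)
  have m: "\<forall>t\<in>Kdual K. \<forall>s\<in>Kdual K. \<xi> (\<lambda>k. t k + s k) = \<xi> t * \<xi> s"
    using d unfolding dual_character_def by blast
  have "\<xi> (\<lambda>k. (\<lambda>k. - t k) k + t k) = \<xi> (\<lambda>k. - t k) * \<xi> t"
    using m[rule_format, OF Kdual_neg[OF t] t] .
  then show ?thesis using xi0 by simp
qed

lemma inv_central: "t \<in> Kdual K \<Longrightarrow> inv\<^bsub>G\<^esub> (0, t) = (0, \<lambda>k. - t k)"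
proof -
  assume t: "t \<in> Kdual K"
  interpret group G by (rule grp)
  have "(0, \<lambda>k. - t k) \<otimes>\<^bsub>G\<^esub> (0, t) = \<one>\<^bsub>G\<^esub>"
    by (simp add: heis_mult heis_one b0l)
  moreover have "(0, t) \<in> carrier G" using t by (simp add: heis_carrier)
  moreover have "(0, \<lambda>k. - t k) \<in> carrier G" using Kdual_neg[OF t] by (simp add: heis_carrier)
  ultimately show ?thesis by (rule inv_equality)
qed

end

lemma schur_iso:
  fixes A :: "complex^'n^'m"
    and \<rho> :: "'g \<Rightarrow> complex^'n^'n" and \<sigma> :: "'g \<Rightarrow> complex^'m^'m"
  assumes r: "irreducible_rep G \<rho>" and s: "irreducible_rep G \<sigma>" and A0: "A \<noteq> 0"
    and int: "\<forall>g\<in>carrier G. \<sigma> g ** A = A ** \<rho> g"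
  shows "isomorphic_reps G \<rho> \<sigma>"
proof -
  have ker: "{x. A *v x = 0} = {0} \<or> {x. A *v x = 0} = UNIV"
  proof -
    have "\<forall>g\<in>carrier G. \<forall>x\<in>{x. A *v x = 0}. \<rho> g *v x \<in> {x. A *v x = 0}"
    proof (intro ballI)
      fix g x assume g: "g \<in> carrier G" and x: "x \<in> {x. A *v x = 0}"
      have "A *v (\<rho> g *v x) = (A ** \<rho> g) *v x" by (simp add: matrix_vector_mul_assoc)
      also have "\<dots> = (\<sigma> g ** A) *v x" using int g by simp
      also have "\<dots> = \<sigma> g *v (A *v x)" by (simp add: matrix_vector_mul_assoc)
      also have "\<dots> = 0" using x by simp
      finally show "\<rho> g *v x \<in> {x. A *v x = 0}" by simp
    qed
    then show ?thesis using r vec.subspace_kernel unfolding irreducible_rep_def by blast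
  qed
  have inj: "inj ((*v) A)"
  proof -
    have "{x. A *v x = 0} \<noteq> UNIV"
    proof
      assume "{x. A *v x = 0} = UNIV"
      then have "\<forall>x. A *v x = 0 *v x" by auto
      then have "A = 0" by (simp add: matrix_eq)
      then show False using A0 by simp
    qed
    then have "{x. A *v x = 0} = {0}" using ker by blast
    then show ?thesis unfolding vec.inj_iff_eq_0 by blast
  qed
  have surj: "surj ((*v) A)"
  proof -
    have inv: "\<forall>g\<in>carrier G. \<forall>y\<in>range ((*v) A). \<sigma> g *v y \<in> range ((*v) A)"
    proof (intro ballI)
      fix g y assume g: "g \<in> carrier G" and y: "y \<in> range ((*v) A)"
      then obtain x where x: "y = A *v x" by blast
      have "\<sigma> g *v y = (\<sigma> g ** A) *v x" by (simp add: x matrix_vector_mul_assoc)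
      also have "\<dots> = A *v (\<rho> g *v x)" using int g by (simp add: matrix_vector_mul_assoc)
      finally show "\<sigma> g *v y \<in> range ((*v) A)" by simp
    qed
    have "vec.subspace (range ((*v) A))" using vec.subspace_image[OF vec.subspace_UNIV] by blast
    then have "range ((*v) A) = {0} \<or> range ((*v) A) = UNIV" using s inv unfolding irreducible_rep_def by blast
    moreover have "range ((*v) A) \<noteq> {0}"
    proof
      assume "range ((*v) A) = {0}"
      then have "\<forall>x. A *v x = 0 *v x" by auto
      then have "A = 0" by (simp add: matrix_eq)
      then show False using A0 by simp
    qed
    ultimately show ?thesis by blast
  qed
  obtain B where B: "B ** A = mat 1" using inj matrix_left_invertible_injective by blast
  obtain C where C: "A ** C = mat 1" using surj matrix_right_invertible_surjective by blast
  have "B = C"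
  proof -
    have "B = B ** (A ** C)" by (simp add: C matrix_mul_rid)
    also have "\<dots> = (B ** A) ** C" by (simp add: matrix_mul_assoc)
    also have "\<dots> = C" by (simp add: B matrix_mul_lid)
    finally show ?thesis .
  qed
  then show ?thesis unfolding isomorphic_reps_def using B C int by metis
qed


context hsetting
begin

lemma finK: "finite K"
  using finite_subset[OF subset_UNIV finite_UNIV_fun[OF finV finite_UNIV_fun[OF finV finF]]] .

lemma finKd: "finite (Kdual K)"
  unfolding Kdual_eq using finite_lin_dual[OF finK finF] .

lemma finC: "finite (carrier G)"
  unfolding heis_carrier using finV finKd by simp

lemma rep_one:
  assumes "has_central_character K \<sigma> \<xi>"
  shows "\<sigma> \<one>\<^bsub>G\<^esub> = mat 1"
proof -
  have "\<sigma> (0, \<lambda>k. 0) = mat (\<xi> (\<lambda>k. 0))"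
    using assms Kdual_zero[of K] unfolding has_central_character_def by blast
  then show ?thesis by (simp add: xi0 heis_one)
qed

lemma trace_vanish:
  fixes \<sigma> :: "'v \<times> (('v \<Rightarrow> 'v \<Rightarrow> 'f) \<Rightarrow> 'f) \<Rightarrow> complex^'m^'m"
  assumes rep: "representation G \<sigma>" and cc: "has_central_character K \<sigma> \<xi>"
    and v: "v \<noteq> 0" and t: "t \<in> Kdual K"
  shows "trace (\<sigma> (v, t)) = 0"
proof -
  interpret group G by (rule grp)
  have hom: "\<And>x y. x \<in> carrier G \<Longrightarrow> y \<in> carrier G \<Longrightarrow> \<sigma> (x \<otimes>\<^bsub>G\<^esub> y) = \<sigma> x ** \<sigma> y"
    using rep unfolding representation_def by blast
  obtain t0 where t0: "t0 \<in> Kdual K" "\<xi> t0 \<noteq> 1"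
    using xi by (auto simp: nontrivial_dual_character_def)
  have "t0 \<in> range (omegaK K v)" using duality[OF finF finV Kalt Ksub symp v] t0(1) by (rule subsetD)
  then obtain w where wt: "omegaK K v w = t0" by (auto simp del: omegaK_def)
  have omv: "omegaK K v w = (\<lambda>k. \<beta> v w k - \<beta> w v k)" using om by blast
  have ck: "t0 k = \<beta> v w k - \<beta> w v k" for k
    using fun_cong[OF omv[unfolded wt], of k] by simp
  define g where "g = (v, t)"
  define h where "h = (w, (\<lambda>k. 0) :: ('v \<Rightarrow> 'v \<Rightarrow> 'f) \<Rightarrow> 'f)"
  define z where "z = ((0::'v), t0)"
  have gC: "g \<in> carrier G" using t by (simp add: g_def heis_carrier)
  have hC: "h \<in> carrier G" using Kdual_zero by (simp add: h_def heis_carrier)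
  have zC: "z \<in> carrier G" using t0 by (simp add: z_def heis_carrier)
  have eq: "g \<otimes>\<^bsub>G\<^esub> h = (h \<otimes>\<^bsub>G\<^esub> g) \<otimes>\<^bsub>G\<^esub> z"
    by (simp add: g_def h_def z_def heis_mult b0r ck fun_eq_iff add.commute)
  have sz: "\<sigma> z = mat (\<xi> t0)" using cc t0 by (simp add: has_central_character_def z_def)
  have comm: "\<sigma> g ** \<sigma> h = \<sigma> h ** \<sigma> g ** mat (\<xi> t0)"
  proof -
    have "\<sigma> g ** \<sigma> h = \<sigma> (g \<otimes>\<^bsub>G\<^esub> h)" using hom[OF gC hC] by simp
    also have "\<dots> = \<sigma> (h \<otimes>\<^bsub>G\<^esub> g) ** \<sigma> z" unfolding eq by (rule hom[OF m_closed[OF hC gC] zC])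
    also have "\<dots> = \<sigma> h ** \<sigma> g ** mat (\<xi> t0)" using hom[OF hC gC] sz by simp
    finally show ?thesis .
  qed
  have hi: "\<sigma> (inv\<^bsub>G\<^esub> h) ** \<sigma> h = mat 1"
    using hom[OF inv_closed[OF hC] hC] l_inv[OF hC] rep_one[OF cc] by simp
  have hi2: "\<sigma> h ** \<sigma> (inv\<^bsub>G\<^esub> h) = mat 1"
    using hom[OF hC inv_closed[OF hC]] r_inv[OF hC] rep_one[OF cc] by simp
  have "trace (\<sigma> g) = trace ((\<sigma> g ** \<sigma> h) ** \<sigma> (inv\<^bsub>G\<^esub> h))"
    by (simp add: matrix_mul_assoc[symmetric] hi2)
  also have "\<dots> = trace (\<sigma> (inv\<^bsub>G\<^esub> h) ** (\<sigma> g ** \<sigma> h))"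
    by (rule trace_mul_sym)
  also have "\<dots> = trace ((\<sigma> (inv\<^bsub>G\<^esub> h) ** \<sigma> h) ** (\<sigma> g ** mat (\<xi> t0)))"
    by (simp add: comm matrix_mul_assoc)
  also have "\<dots> = \<xi> t0 * trace (\<sigma> g)"
    by (simp add: hi trace_mul_mat)
  finally have "(1 - \<xi> t0) * trace (\<sigma> g) = 0" by (simp add: algebra_simps)
  then show ?thesis using t0(2) by (simp add: g_def)
qed

lemma main:
  fixes \<rho> :: "'v \<times> (('v \<Rightarrow> 'v \<Rightarrow> 'f) \<Rightarrow> 'f) \<Rightarrow> complex^'n^'n"
    and \<sigma> :: "'v \<times> (('v \<Rightarrow> 'v \<Rightarrow> 'f) \<Rightarrow> 'f) \<Rightarrow> complex^'m^'m"
  assumes ir: "irreducible_rep G \<rho>" and isg: "irreducible_rep G \<sigma>"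
    and cr: "has_central_character K \<rho> \<xi>" and cs: "has_central_character K \<sigma> \<xi>"
  shows "isomorphic_reps G \<rho> \<sigma>"
proof (rule ccontr)
  assume niso: "\<not> isomorphic_reps G \<rho> \<sigma>"
  interpret group G by (rule grp)
  have rr: "representation G \<rho>" using ir by (simp add: irreducible_rep_def)
  have rs: "representation G \<sigma>" using isg by (simp add: irreducible_rep_def)
  have homr: "\<And>x y. x \<in> carrier G \<Longrightarrow> y \<in> carrier G \<Longrightarrow> \<rho> (x \<otimes>\<^bsub>G\<^esub> y) = \<rho> x ** \<rho> y"
    using rr unfolding representation_def by blast
  have homs: "\<And>x y. x \<in> carrier G \<Longrightarrow> y \<in> carrier G \<Longrightarrow> \<sigma> (x \<otimes>\<^bsub>G\<^esub> y) = \<sigma> x ** \<sigma> y"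
    using rs unfolding representation_def by blast
  define C where "C = carrier G"
  define Av where "Av X = (\<Sum>g\<in>C. \<sigma> g ** X ** \<rho> (inv\<^bsub>G\<^esub> g))" for X :: "complex^'n^'m"
  have intw: "\<sigma> h ** Av X = Av X ** \<rho> h" if h: "h \<in> carrier G" for h X
  proof -
    have bij: "bij_betw (\<lambda>g. inv\<^bsub>G\<^esub> h \<otimes>\<^bsub>G\<^esub> g) C C"
      by (rule bij_betwI[where g="\<lambda>g. h \<otimes>\<^bsub>G\<^esub> g"])
        (auto simp: C_def h m_assoc[symmetric])
    have "\<sigma> h ** Av X = (\<Sum>g\<in>C. \<sigma> h ** (\<sigma> g ** X ** \<rho> (inv\<^bsub>G\<^esub> g)))"
      by (simp add: Av_def mat_mul_sum_left)
    also have "\<dots> = (\<Sum>g\<in>C. \<sigma> (h \<otimes>\<^bsub>G\<^esub> g) ** X ** \<rho> (inv\<^bsub>G\<^esub> g))"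
      by (rule sum.cong) (simp_all add: C_def homs h matrix_mul_assoc)
    also have "\<dots> = (\<Sum>g\<in>C. \<sigma> (h \<otimes>\<^bsub>G\<^esub> (inv\<^bsub>G\<^esub> h \<otimes>\<^bsub>G\<^esub> g)) ** X
                         ** \<rho> (inv\<^bsub>G\<^esub> (inv\<^bsub>G\<^esub> h \<otimes>\<^bsub>G\<^esub> g)))"
      by (rule sum.reindex_bij_betw[OF bij, symmetric])
    also have "\<dots> = (\<Sum>g\<in>C. \<sigma> g ** X ** \<rho> (inv\<^bsub>G\<^esub> g) ** \<rho> h)"
    proof (rule sum.cong)
      fix g assume g: "g \<in> C"
      then have gc: "g \<in> carrier G" by (simp add: C_def)
      have e1: "h \<otimes>\<^bsub>G\<^esub> (inv\<^bsub>G\<^esub> h \<otimes>\<^bsub>G\<^esub> g) = g"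
        using gc h by (simp add: m_assoc[symmetric])
      have e2: "inv\<^bsub>G\<^esub> (inv\<^bsub>G\<^esub> h \<otimes>\<^bsub>G\<^esub> g) = inv\<^bsub>G\<^esub> g \<otimes>\<^bsub>G\<^esub> h"
        using gc h by (simp add: inv_mult_group)
      show "\<sigma> (h \<otimes>\<^bsub>G\<^esub> (inv\<^bsub>G\<^esub> h \<otimes>\<^bsub>G\<^esub> g)) ** X ** \<rho> (inv\<^bsub>G\<^esub> (inv\<^bsub>G\<^esub> h \<otimes>\<^bsub>G\<^esub> g))
            = \<sigma> g ** X ** \<rho> (inv\<^bsub>G\<^esub> g) ** \<rho> h"
        unfolding e1 e2 using gc h by (simp add: homr matrix_mul_assoc)
    qed simp
    also have "\<dots> = Av X ** \<rho> h" by (simp add: Av_def mat_mul_sum_right)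
    finally show ?thesis .
  qed
  have A0: "Av X = 0" for X
  proof (rule ccontr)
    assume "Av X \<noteq> 0"
    then have "isomorphic_reps G \<rho> \<sigma>" using schur_iso[OF ir isg] intw by blast
    then show False using niso by simp
  qed
  have entry: "(\<Sum>g\<in>C. \<sigma> g $ a $ a * \<rho> (inv\<^bsub>G\<^esub> g) $ b $ b) = 0" for a b
  proof -
    let ?E = "(\<chi> i j. if i = a \<and> j = b then 1 else 0) :: complex^'n^'m"
    have "(Av ?E) $ a $ b = (\<Sum>g\<in>C. (\<sigma> g ** ?E ** \<rho> (inv\<^bsub>G\<^esub> g)) $ a $ b)"
      by (simp add: Av_def sum_component)
    also have "\<dots> = (\<Sum>g\<in>C. \<sigma> g $ a $ a * \<rho> (inv\<^bsub>G\<^esub> g) $ b $ b)"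
      by (simp add: entry_lemma)
    finally show ?thesis using A0 by simp
  qed
  have S0: "(\<Sum>g\<in>C. trace (\<sigma> g) * trace (\<rho> (inv\<^bsub>G\<^esub> g))) = 0"
  proof -
    have "(\<Sum>g\<in>C. trace (\<sigma> g) * trace (\<rho> (inv\<^bsub>G\<^esub> g)))
        = (\<Sum>g\<in>C. \<Sum>a\<in>UNIV. \<Sum>b\<in>UNIV. \<sigma> g $ a $ a * \<rho> (inv\<^bsub>G\<^esub> g) $ b $ b)"
      by (simp add: trace_def sum_product)
    also have "\<dots> = (\<Sum>a\<in>UNIV. \<Sum>b\<in>UNIV. \<Sum>g\<in>C. \<sigma> g $ a $ a * \<rho> (inv\<^bsub>G\<^esub> g) $ b $ b)"
      by (simp add: sum.swap[of _ C] sum.swap[of _ C UNIV])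
    also have "\<dots> = 0" by (simp add: entry)
    finally show ?thesis .
  qed
  have S1: "(\<Sum>g\<in>C. trace (\<sigma> g) * trace (\<rho> (inv\<^bsub>G\<^esub> g)))
      = of_nat (card (Kdual K)) * (of_nat CARD('m) * of_nat CARD('n))"
  proof -
    define F where "F g = trace (\<sigma> g) * trace (\<rho> (inv\<^bsub>G\<^esub> g))" for g
    have "(\<Sum>g\<in>C. F g) = (\<Sum>v\<in>UNIV. \<Sum>t\<in>Kdual K. F (v, t))"
      by (simp add: C_def heis_carrier sum.cartesian_product)
    also have "\<dots> = (\<Sum>v\<in>{0}. \<Sum>t\<in>Kdual K. F (v, t))"
    proof (rule sum.mono_neutral_right)
      show "finite (UNIV :: 'v set)" by (rule finV)
      show "{0} \<subseteq> (UNIV :: 'v set)" by simp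
      show "\<forall>v\<in>UNIV - {0}. (\<Sum>t\<in>Kdual K. F (v, t)) = 0"
        by (auto simp: F_def trace_vanish[OF rs cs] intro!: sum.neutral)
    qed
    also have "\<dots> = (\<Sum>t\<in>Kdual K. of_nat CARD('m) * of_nat CARD('n))"
    proof -
      have "F (0, t) = of_nat CARD('m) * of_nat CARD('n)" if t: "t \<in> Kdual K" for t
      proof -
        have "\<sigma> (0, t) = mat (\<xi> t)" using cs t by (simp add: has_central_character_def)
        moreover have "\<rho> (inv\<^bsub>G\<^esub> (0, t)) = mat (\<xi> (\<lambda>k. - t k))"
          using cr Kdual_neg[OF t] inv_central[OF t] by (simp add: has_central_character_def)
        ultimately have "F (0, t) = of_nat CARD('m) * \<xi> t * (of_nat CARD('n) * \<xi> (\<lambda>k. - t k))"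
          by (simp add: F_def trace_mat)
        also have "\<dots> = of_nat CARD('m) * of_nat CARD('n) * (\<xi> (\<lambda>k. - t k) * \<xi> t)"
          by (simp add: algebra_simps)
        also have "\<dots> = of_nat CARD('m) * of_nat CARD('n)" using xineg[OF t] by simp
        finally show ?thesis .
      qed
      then show ?thesis by simp
    qed
    also have "\<dots> = of_nat (card (Kdual K)) * (of_nat CARD('m) * of_nat CARD('n))" by simp
    finally show ?thesis by (simp add: F_def)
  qed
  have "card (Kdual K) \<noteq> 0" using finKd Kdual_zero[of K] by auto
  then have "(of_nat (card (Kdual K)) * (of_nat CARD('m) * of_nat CARD('n)) :: complex) \<noteq> 0" by simp
  then show False using S0 S1 by simp
qed

end

lemma finite_V_of_fin_dim:
  fixes sc :: "'f::field \<Rightarrow> 'v::ab_group_add \<Rightarrow> 'v"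
  assumes fd: "fin_dim_vs sc" and finF: "finite (UNIV::'f set)"
  shows "finite (UNIV::'v set)"
proof -
  obtain B where vs: "vector_space sc" and B: "finite B" "module.span sc B = UNIV"
    using fd unfolding fin_dim_vs_def by blast
  interpret vector_space sc by (rule vs)
  have "span B = range (\<lambda>u. \<Sum>v\<in>B. sc (u v) v)" by (rule span_finite[OF B(1)])
  also have "\<dots> \<subseteq> (\<lambda>u. \<Sum>v\<in>B. sc (u v) v) ` (PiE B (\<lambda>_. UNIV))"
  proof
    fix x assume "x \<in> range (\<lambda>u. \<Sum>v\<in>B. sc (u v) v)"
    then obtain u where x: "x = (\<Sum>v\<in>B. sc (u v) v)" by blast
    have "x = (\<Sum>v\<in>B. sc (restrict u B v) v)" unfolding x by (rule sum.cong) auto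
    moreover have "restrict u B \<in> PiE B (\<lambda>_. UNIV)" by simp
    ultimately show "x \<in> (\<lambda>u. \<Sum>v\<in>B. sc (u v) v) ` (PiE B (\<lambda>_. UNIV))" by blast
  qed
  finally have "UNIV \<subseteq> (\<lambda>u. \<Sum>v\<in>B. sc (u v) v) ` (PiE B (\<lambda>_. UNIV))" using B(2) by simp
  moreover have "finite (PiE B (\<lambda>_. UNIV::'f set))" using B(1) finF by (intro finite_PiE) auto
  ultimately show ?thesis using finite_subset by blast
qed

theorem corollary2p12:
  fixes p :: nat
    and sc :: "'f::field \<Rightarrow> 'v::ab_group_add \<Rightarrow> 'v"
    and K :: "('v \<Rightarrow> 'v \<Rightarrow> 'f) set"
    and \<beta> :: "'v \<Rightarrow> 'v \<Rightarrow> (('v \<Rightarrow> 'v \<Rightarrow> 'f) \<Rightarrow> 'f)"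
    and \<xi> :: "(('v \<Rightarrow> 'v \<Rightarrow> 'f) \<Rightarrow> 'f) \<Rightarrow> complex"
    and \<rho> :: "'v \<times> (('v \<Rightarrow> 'v \<Rightarrow> 'f) \<Rightarrow> 'f) \<Rightarrow> complex^'n^'n"
    and \<sigma> :: "'v \<times> (('v \<Rightarrow> 'v \<Rightarrow> 'f) \<Rightarrow> 'f) \<Rightarrow> complex^'m^'m"
  assumes "prime p"
    and "CARD('f) = p"
    and "fin_dim_vs sc"
    and "K \<subseteq> alt_forms sc"
    and "forms_subspace K"
    and "symplectic K"
    and "bilinear_to_dual sc K \<beta>"
    and "\<forall>v w. omegaK K v w = (\<lambda>k. \<beta> v w k - \<beta> w v k)"
    and "nontrivial_dual_character K \<xi>"
    and "irreducible_rep (heis K \<beta>) \<rho>"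
    and "irreducible_rep (heis K \<beta>) \<sigma>"
    and "has_central_character K \<rho> \<xi>"
    and "has_central_character K \<sigma> \<xi>"
  shows "isomorphic_reps (heis K \<beta>) \<rho> \<sigma>"
proof -
  have finF: "finite (UNIV::'f set)"
  proof (rule card_ge_0_finite)
    show "card (UNIV::'f set) > 0" using assms(1,2) prime_gt_0_nat by simp
  qed
  have finV: "finite (UNIV::'v set)" by (rule finite_V_of_fin_dim[OF assms(3) finF])
  interpret hsetting sc K \<beta> \<xi>
    by unfold_locales (use finF finV assms in auto)
  show ?thesis by (rule main[OF assms(10-13)])
qed

end
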